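(* For $n\ge 2$ let $$S_n^{(1)}(t):=\sum_{T\in\mathfrak{D}\mathfrak{T}^{\oplus}_n}t^{n_\ominus(T)},\qquad S_n^{(2)}(t):=\sum_{T\in\mathfrak{D}\mathfrak{T}^{\ominus}_n}t^{n_\ominus(T)},$$ and set $S_1^{(1)}(t)=S_1^{(2)}(t)=1$. Let $S_n(t)=\sum_{\pi\in\mathfrak{S}_n(2413,3142)}t^{\mathrm{des}(\pi)}$. Then for $n\geq2$, $$S_n^{(1)}(t)=\sum_{j=1}^{n-1}S_j(t)S_{n-j}^{(2)}(t)\qquad\text{and}\qquad S_n^{(2)}(t)=t\sum_{j=1}^{n-1}S_j(t)S_{n-j}^{(1)}(t).$$
   Context: $\mathfrak{S}_n(2413,3142)$ is the set of permutations of $[n]$ avoiding the patterns $2413$ and $3142$; $\mathrm{des}(\pi)=\#\{i\in[n-1]:\pi_i>\pi_{i+1}\}$. A binary tree is either empty or a root with a left and a right subtree, both binary trees. A right chain is a maximal sequence of nodes $v_1,\dots,v_l$ with $v_1$ the root or a left child and each $v_{j+1}$ the right child of $v_j$. A di-sk tree is a binary tree with nodes labelled $\oplus$ or $\ominus$ such that labels alternate along every right chain; $\mathfrak{D}\mathfrak{T}_n$ is the set of di-sk trees with $n-1$ nodes, $n_\ominus(T)$ the number of nodes labelled $\ominus$, and $\mathfrak{D}\mathfrak{T}^{\oplus}_n$ (resp. $\mathfrak{D}\mathfrak{T}^{\ominus}_n$) the set of trees in $\mathfrak{D}\mathfrak{T}_n$ whose root is labelled $\oplus$ (resp. $\ominus$).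 It is known that $S_n(t)=\sum_{T\in\mathfrak{D}\mathfrak{T}_n}t^{n_\ominus(T)}$. *)

theory Defs
  imports Main "HOL-Combinatorics.Multiset_Permutations"
begin

(* Permutations of [n] are represented as lists (one-line notation). *)

definition contains_pattern :: "nat list \<Rightarrow> nat list \<Rightarrow> bool" where
  "contains_pattern \<sigma> \<pi> \<longleftrightarrow>
     (\<exists>is. length is = length \<sigma> \<and> sorted_wrt (<) is \<and> (\<forall>k<length is. is ! k < length \<pi>) \<and>
        (\<forall>a<length is. \<forall>b<length is. (\<pi> ! (is ! a) < \<pi> ! (is ! b)) \<longleftrightarrow> (\<sigma> ! a < \<sigma> ! b)))"

definition avoids :: "nat list \<Rightarrow> nat list \<Rightarrow> bool" where
  "avoids \<pi> \<sigma> \<longleftrightarrow> \<not> contains_pattern \<sigma> \<pi>"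

definition sep_perms :: "nat \<Rightarrow> nat list set" where
  "sep_perms n = {\<pi> \<in> permutations_of_set {1..n}. avoids \<pi> [2,4,1,3] \<and> avoids \<pi> [3,1,4,2]}"

definition des :: "nat list \<Rightarrow> nat" where
  "des \<pi> = card {i. Suc i < length \<pi> \<and> \<pi> ! i > \<pi> ! Suc i}"

definition S :: "nat \<Rightarrow> 'a::comm_semiring_1 \<Rightarrow> 'a" where
  "S n t = (\<Sum>\<pi>\<in>sep_perms n. t ^ des \<pi>)"

datatype sign = Plus | Minus

datatype stree = Leaf | Node stree sign stree

fun nodes :: "stree \<Rightarrow> nat" where
  "nodes Leaf = 0"
| "nodes (Node l s r) = nodes l + 1 + nodes r"

fun n_minus :: "stree \<Rightarrow> nat" where
  "n_minus Leaf = 0"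
| "n_minus (Node l s r) = n_minus l + (if s = Minus then 1 else 0) + n_minus r"

(* labels alternate along every right chain: each node's label differs from that of its right child *)
fun is_disk :: "stree \<Rightarrow> bool" where
  "is_disk Leaf = True"
| "is_disk (Node l s r) = (is_disk l \<and> is_disk r \<and>
      (case r of Leaf \<Rightarrow> True | Node _ s' _ \<Rightarrow> s' \<noteq> s))"

fun root_label :: "stree \<Rightarrow> sign option" where
  "root_label Leaf = None"
| "root_label (Node _ s _) = Some s"

definition DT :: "nat \<Rightarrow> stree set" where
  "DT n = {T. is_disk T \<and> nodes T = n - 1}"

definition DT_plus :: "nat \<Rightarrow> stree set" where
  "DT_plus n = {T \<in> DT n. root_label T = Some Plus}"

definition DT_minus :: "nat \<Rightarrow> stree set" where
  "DT_minus n = {T \<in> DT n. root_label T = Some Minus}"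

definition S1 :: "nat \<Rightarrow> 'a::comm_semiring_1 \<Rightarrow> 'a" where
  "S1 n t = (if n = 1 then 1 else (\<Sum>T\<in>DT_plus n. t ^ n_minus T))"

definition S2 :: "nat \<Rightarrow> 'a::comm_semiring_1 \<Rightarrow> 'a" where
  "S2 n t = (if n = 1 then 1 else (\<Sum>T\<in>DT_minus n. t ^ n_minus T))"

end

theory Submission
  imports Defs
begin

lemma perm_iff: "\<pi> \<in> permutations_of_set A \<longleftrightarrow> set \<pi> = A \<and> distinct \<pi>"
  by (simp add: permutations_of_set_def)

lemma perm_len: "\<pi> \<in> permutations_of_set {1..n} \<Longrightarrow> length \<pi> = n"
  by (auto simp: permutations_of_set_def dest: distinct_card)

lemma contains_embed:
  assumes c: "contains_pattern p \<pi>" and f: "strict_mono f"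
    and fi: "\<And>j. j < length \<pi> \<Longrightarrow> f j < length \<pi>' \<and> \<pi>' ! (f j) = g (\<pi> ! j)"
    and g: "\<And>u v. u \<in> set \<pi> \<Longrightarrow> v \<in> set \<pi> \<Longrightarrow> g u < g v \<longleftrightarrow> u < v"
  shows "contains_pattern p \<pi>'"
proof -
  from c obtain ix where l: "length ix = length p" and s: "sorted_wrt (<) ix"
    and b: "\<forall>k<length ix. ix ! k < length \<pi>"
    and ord: "\<forall>a<length ix. \<forall>b<length ix. (\<pi> ! (ix ! a) < \<pi> ! (ix ! b)) \<longleftrightarrow> (p ! a < p ! b)"
    unfolding contains_pattern_def by blast
  show ?thesis unfolding contains_pattern_def
  proof (intro exI[of _ "map f ix"] conjI allI impI)
    show "length (map f ix) = length p" using l by simp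
    show "sorted_wrt (<) (map f ix)" using s f
      by (auto simp: sorted_wrt_map strict_mono_def elim: sorted_wrt_mono_rel[rotated])
  next
    fix k assume "k < length (map f ix)" thus "map f ix ! k < length \<pi>'" using b fi by auto
  next
    fix a c assume a: "a < length (map f ix)" and c: "c < length (map f ix)"
    have "\<pi>' ! (map f ix ! a) = g (\<pi> ! (ix ! a))" "\<pi>' ! (map f ix ! c) = g (\<pi> ! (ix ! c))"
      using a c b fi by auto
    moreover have "g (\<pi> ! (ix ! a)) < g (\<pi> ! (ix ! c)) \<longleftrightarrow> \<pi> ! (ix ! a) < \<pi> ! (ix ! c)"
      using a c b by (intro g) (auto intro: nth_mem)
    ultimately show "(\<pi>' ! (map f ix ! a) < \<pi>' ! (map f ix ! c)) \<longleftrightarrow> (p ! a < p ! c)"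
      using ord a c by simp
  qed
qed

lemma contains_split:
  assumes c: "contains_pattern p (xs @ ys)"
    and ind: "\<And>a. 0 < a \<Longrightarrow> a < length p \<Longrightarrow> \<exists>x<a. \<exists>y. a \<le> y \<and> y < length p \<and> (p!x < p!y) \<noteq> cc"
    and rel: "\<And>u v. u \<in> set xs \<Longrightarrow> v \<in> set ys \<Longrightarrow> (u < v) = cc"
  shows "contains_pattern p xs \<or> contains_pattern p ys"
proof -
  from c obtain ix where l: "length ix = length p" and s: "sorted_wrt (<) ix"
    and b: "\<forall>k<length ix. ix ! k < length (xs @ ys)"
    and ord: "\<forall>a<length ix. \<forall>b<length ix. ((xs@ys) ! (ix ! a) < (xs@ys) ! (ix ! b)) \<longleftrightarrow> (p ! a < p ! b)"
    unfolding contains_pattern_def by blast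
  have sn: "\<And>i j. i < j \<Longrightarrow> j < length ix \<Longrightarrow> ix ! i < ix ! j"
    using s by (simp add: sorted_wrt_iff_nth_less)
  show ?thesis
  proof (cases "\<forall>k<length ix. ix ! k < length xs")
    case True
    have "contains_pattern p xs" unfolding contains_pattern_def
      using l s True ord by (auto simp: nth_append)
    thus ?thesis by blast
  next
    case False
    then obtain k0 where k0: "k0 < length ix" "\<not> ix ! k0 < length xs" by blast
    define a where "a = (LEAST k. k < length ix \<and> \<not> ix ! k < length xs)"
    have a: "a < length ix" "\<not> ix ! a < length xs"
      using LeastI[of "\<lambda>k. k < length ix \<and> \<not> ix ! k < length xs", OF conjI[OF k0]]
      unfolding a_def by auto
    have lt: "\<And>x. x < a \<Longrightarrow> ix ! x < length xs"
      using not_less_Least a(1) unfolding a_def by fastforce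
    have ge: "\<And>y. a \<le> y \<Longrightarrow> y < length ix \<Longrightarrow> length xs \<le> ix ! y"
      using a sn by (metis le_less less_trans not_le)
    show ?thesis
    proof (cases "a = 0")
      case True
      have ge0: "\<And>y. y < length ix \<Longrightarrow> length xs \<le> ix ! y" using ge True by simp
      have "contains_pattern p ys" unfolding contains_pattern_def
      proof (intro exI[of _ "map (\<lambda>i. i - length xs) ix"] conjI allI impI)
        show "length (map (\<lambda>i. i - length xs) ix) = length p" using l by simp
        show "sorted_wrt (<) (map (\<lambda>i. i - length xs) ix)"
          unfolding sorted_wrt_iff_nth_less using sn ge0 by (auto simp: less_diff_conv2) 
      next
        fix k assume "k < length (map (\<lambda>i. i - length xs) ix)"
        thus "map (\<lambda>i. i - length xs) ix ! k < length ys" using b ge0[of k] by auto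
      next
        fix x y assume xy0: "x < length (map (\<lambda>i. i - length xs) ix)" "y < length (map (\<lambda>i. i - length xs) ix)"
        show "(ys ! (map (\<lambda>i. i - length xs) ix ! x) < ys ! (map (\<lambda>i. i - length xs) ix ! y)) = (p ! x < p ! y)"
        proof -
          have xy: "x < length ix" "y < length ix" using xy0 by auto
          show ?thesis using ord[rule_format, OF xy] ge0[OF xy(1)] ge0[OF xy(2)] xy by (simp add: nth_append)
        qed
      qed
      thus ?thesis by blast
    next
      case False
      then obtain x y where xy: "x < a" "a \<le> y" "y < length p" "(p!x < p!y) \<noteq> cc"
        using ind[of a] a l by auto
      have "ix ! x < length xs" using lt xy by auto
      moreover have "length xs \<le> ix ! y" "ix ! y < length (xs @ ys)" using ge xy l b by auto
      ultimately have "(xs @ ys) ! (ix ! x) \<in> set xs" "(xs @ ys) ! (ix ! y) \<in> set ys"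
        by (auto simp: nth_append)
      hence "((xs @ ys) ! (ix ! x) < (xs @ ys) ! (ix ! y)) = cc" by (rule rel)
      moreover have "x < length ix" "y < length ix" using xy l a by auto
      ultimately show ?thesis using ord xy by auto
    qed
  qed
qed

lemma ind2413: "0<a \<Longrightarrow> a<length [2,4,1,3::nat] \<Longrightarrow> \<exists>x<a. \<exists>y. a \<le> y \<and> y < length [2,4,1,3::nat] \<and> ([2,4,1,3::nat]!x < [2,4,1,3]!y) \<noteq> cc"
proof -
  assume "0<a" "a<length [2,4,1,3::nat]"
  then have "a = 1 \<or> a = 2 \<or> a = 3" by auto
  then show ?thesis
  proof (elim disjE)
    assume "a = 1" thus ?thesis
      by (cases cc) (rule exI[of _ 0], simp, rule exI[of _ 2], simp, rule exI[of _ 0], simp, rule exI[of _ 1], simp)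
  next
    assume "a = 2" thus ?thesis
      by (cases cc) (rule exI[of _ 0], simp, rule exI[of _ 2], simp, rule exI[of _ 0], simp, rule exI[of _ 3], simp)
  next
    assume "a = 3" thus ?thesis
      by (cases cc) (rule exI[of _ 1], simp, rule exI[of _ 3], simp, rule exI[of _ 0], simp, rule exI[of _ 3], simp)
  qed
qed

lemma ind3142: "0<a \<Longrightarrow> a<length [3,1,4,2::nat] \<Longrightarrow> \<exists>x<a. \<exists>y. a \<le> y \<and> y < length [3,1,4,2::nat] \<and> ([3,1,4,2::nat]!x < [3,1,4,2]!y) \<noteq> cc"
proof -
  assume "0<a" "a<length [3,1,4,2::nat]"
  then have "a = 1 \<or> a = 2 \<or> a = 3" by auto
  then show ?thesis
  proof (elim disjE)
    assume "a = 1" thus ?thesis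
      by (cases cc) (rule exI[of _ 0], simp, rule exI[of _ 1], simp, rule exI[of _ 0], simp, rule exI[of _ 2], simp)
  next
    assume "a = 2" thus ?thesis
      by (cases cc) (rule exI[of _ 0], simp, rule exI[of _ 3], simp, rule exI[of _ 0], simp, rule exI[of _ 2], simp)
  next
    assume "a = 3" thus ?thesis
      by (cases cc) (rule exI[of _ 0], simp, rule exI[of _ 3], simp, rule exI[of _ 1], simp, rule exI[of _ 3], simp)
  qed
qed

lemma c2413: "i0 < i1 \<Longrightarrow> i1 < i2 \<Longrightarrow> i2 < i3 \<Longrightarrow> i3 < length p \<Longrightarrow> p!i2 < p!i0 \<Longrightarrow> p!i0 < p!i3 \<Longrightarrow> p!i3 < p!i1 \<Longrightarrow> contains_pattern [2,4,1,3] p"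
  unfolding contains_pattern_def
  apply (rule exI[of _ "[i0,i1,i2,i3]"])
  apply (simp add: All_less_Suc numeral_eq_Suc)
  done
lemma c3142: "i0 < i1 \<Longrightarrow> i1 < i2 \<Longrightarrow> i2 < i3 \<Longrightarrow> i3 < length p \<Longrightarrow> p!i1 < p!i3 \<Longrightarrow> p!i3 < p!i0 \<Longrightarrow> p!i0 < p!i2 \<Longrightarrow> contains_pattern [3,1,4,2] p"
  unfolding contains_pattern_def
  apply (rule exI[of _ "[i0,i1,i2,i3]"])
  apply (simp add: All_less_Suc numeral_eq_Suc)
  done


lemma des_Nil[simp]: "des [] = 0" and des_single[simp]: "des [x] = 0"
  by (simp_all add: des_def)

lemma des_Cons2: "des (x # y # zs) = des (y # zs) + (if y < x then 1 else 0)"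
proof -
  let ?A = "{i. Suc i < length (x # y # zs) \<and> (x # y # zs) ! i > (x # y # zs) ! Suc i}"
  let ?B = "{i. Suc i < length (y # zs) \<and> (y # zs) ! i > (y # zs) ! Suc i}"
  have eq: "?A = (if y < x then {0} else {}) \<union> Suc ` ?B"
  proof (intro set_eqI iffI)
    fix i assume "i \<in> ?A" thus "i \<in> (if y < x then {0} else {}) \<union> Suc ` ?B"
      by (cases i) auto
  qed (auto split: if_splits)
  have fB: "finite ?B" by (rule finite_subset[of _ "{..<length (y#zs)}"]) auto
  have "card ?A = card (if y < x then {0} else {}) + card (Suc ` ?B)"
    unfolding eq by (subst card_Un_disjoint) (use fB in auto)
  also have "card (Suc ` ?B) = card ?B" by (simp add: card_image)
  finally have "card ?A = card (if y < x then {0::nat} else {}) + card ?B" .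
  moreover have "card (if y < x then {0::nat} else {}) = (if y < x then 1 else 0)" by simp
  ultimately show ?thesis unfolding des_def by presburger
qed

lemma des_append: "des (xs @ ys) = des xs + des ys + (if xs \<noteq> [] \<and> ys \<noteq> [] \<and> hd ys < last xs then 1 else 0)"
proof (induction xs rule: induct_list012)
  case 1 thus ?case by simp
next
  case (2 x) thus ?case by (cases ys) (auto simp: des_Cons2)
next
  case (3 x y zs) thus ?case by (simp add: des_Cons2)
qed

lemma des_map: assumes "\<And>u v. u \<in> set xs \<Longrightarrow> v \<in> set xs \<Longrightarrow> g u < g v \<longleftrightarrow> u < v"
  shows "des (map g xs) = des xs"
proof -
  have "{i. Suc i < length (map g xs) \<and> map g xs ! i > map g xs ! Suc i} = {i. Suc i < length xs \<and> xs ! i > xs ! Suc i}"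
    using assms by (auto intro: nth_mem)
  thus ?thesis by (simp add: des_def)
qed

lemma low_set:
  assumes "finite X" "X \<union> Y = {1..m}" "\<And>x y. x \<in> X \<Longrightarrow> y \<in> Y \<Longrightarrow> x < y"
  shows "X = {1..card X}"
proof -
  have "X \<subseteq> {1..card X}"
  proof
    fix x assume x: "x \<in> X"
    have "{1..x} \<subseteq> X"
    proof
      fix z assume z: "z \<in> {1..x}"
      have "x \<le> m" using x assms(2) by auto
      hence "z \<in> X \<union> Y" using z assms(2) by auto
      moreover have "z \<notin> Y" using assms(3)[OF x] z by force
      ultimately show "z \<in> X" by blast
    qed
    hence "card {1..x} \<le> card X" using assms(1) by (rule card_mono[rotated])
    moreover have "1 \<le> x" using x assms(2) by auto
    ultimately show "x \<in> {1..card X}" by simp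
  qed
  thus ?thesis by (intro card_subset_eq) auto
qed

definition pdec :: "nat list \<Rightarrow> bool" where
  "pdec \<pi> \<longleftrightarrow> (\<exists>k. 0 < k \<and> k < length \<pi> \<and> set (take k \<pi>) = {1..k})"
definition mdec :: "nat list \<Rightarrow> bool" where
  "mdec \<pi> \<longleftrightarrow> (\<exists>k. 0 < k \<and> k < length \<pi> \<and> set (take k \<pi>) = {length \<pi> - k + 1..length \<pi>})"


lemma avoids_remove:
  assumes "avoids (xs @ z # ys) p" shows "avoids (xs @ ys) p"
proof -
  { assume c: "contains_pattern p (xs @ ys)"
    have "contains_pattern p (xs @ z # ys)"
    proof (rule contains_embed[OF c, where f = "\<lambda>j. if j < length xs then j else Suc j" and g = id])
      show "strict_mono (\<lambda>j. if j < length xs then j else Suc j)"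
        by (auto simp: strict_mono_def)
    qed (auto simp: nth_append Suc_diff_le) }
  thus ?thesis using assms by (auto simp: avoids_def)
qed

lemma nth_in_drop: "n \<le> q \<Longrightarrow> q < length xs \<Longrightarrow> xs ! q \<in> set (drop n xs)"
  using nth_mem[of "q - n" "drop n xs"] by simp

lemma key:
  "\<pi> \<in> permutations_of_set {1..n} \<Longrightarrow> avoids \<pi> [2,4,1,3] \<Longrightarrow> avoids \<pi> [3,1,4,2] \<Longrightarrow> 2 \<le> n
   \<Longrightarrow> pdec \<pi> \<or> mdec \<pi>"
proof (induction n arbitrary: \<pi>)
  case 0 thus ?case by simp
next
  case (Suc m)
  have sp: "set \<pi> = {1..Suc m}" and dp: "distinct \<pi>" using Suc.prems(1) by (auto simp: perm_iff)
  have lp: "length \<pi> = Suc m" using perm_len[OF Suc.prems(1)] .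
  have "Suc m \<in> set \<pi>" using sp by auto
  then obtain xs ys where pxy: "\<pi> = xs @ Suc m # ys" by (meson split_list)
  have dxy: "distinct (xs @ ys)" and nxy: "Suc m \<notin> set xs" "Suc m \<notin> set ys"
    using dp unfolding pxy by simp_all
  have "set (xs @ ys) = set \<pi> - {Suc m}" unfolding pxy using nxy by auto
  also have "\<dots> = {1..m}" unfolding sp by (auto simp: atLeastAtMostSuc_conv)
  finally have sxy: "set (xs @ ys) = {1..m}" .
  have subx: "set xs \<subseteq> {1..m}" and suby: "set ys \<subseteq> {1..m}"
    using sxy by (metis set_append Un_upper1, metis set_append Un_upper2)
  have lxy: "length xs + length ys = m" using lp pxy by simp
  have disj: "\<And>u. u \<in> set xs \<Longrightarrow> u \<notin> set ys" using dxy by auto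
  show ?case
  proof (cases "xs = []")
    case True
    have "mdec \<pi>" unfolding mdec_def using Suc.prems(4) lp pxy True
      by (intro exI[of _ 1]) auto
    thus ?thesis ..
  next
    case xne: False
    show ?thesis
    proof (cases "ys = []")
      case True
      have "pdec \<pi>" unfolding pdec_def using Suc.prems(4) lp pxy True sxy
        by (intro exI[of _ m]) auto
      thus ?thesis ..
    next
      case yne: False
      have m2: "2 \<le> m" using xne yne lxy by (cases xs; cases ys) auto
      have pp: "xs @ ys \<in> permutations_of_set {1..m}" using sxy dxy by (simp add: perm_iff)
      have a1: "avoids (xs @ ys) [2,4,1,3]" "avoids (xs @ ys) [3,1,4,2]"
        using avoids_remove Suc.prems(2,3) pxy by blast+
      define i where "i = length xs"
      have i0: "0 < i" using xne i_def by simp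
      have IH: "pdec (xs @ ys) \<or> mdec (xs @ ys)" using Suc.IH[OF pp a1 m2] .
      thus ?thesis
      proof
        assume "pdec (xs @ ys)"
        then obtain k where k: "0 < k" "k < m" "set (take k (xs @ ys)) = {1..k}"
          unfolding pdec_def using lxy by auto
        show ?thesis
        proof (cases "k \<le> i")
          case True
          have "take k \<pi> = take k (xs @ ys)" using pxy True i_def by simp
          hence "pdec \<pi>" unfolding pdec_def using k lp by (intro exI[of _ k]) auto
          thus ?thesis ..
        next
          case kgt: False
          show ?thesis
          proof (cases "\<forall>u\<in>set xs. \<forall>v\<in>set ys. u < v")
            case True
            have "set xs = {1..card (set xs)}"
              by (rule low_set[of _ "set ys" m]) (use True sxy in auto)
            hence "set xs = {1..i}" using distinct_card[of xs] dxy i_def by simp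
            hence "set (take i \<pi>) = {1..i}" using pxy i_def by simp
            hence "pdec \<pi>" unfolding pdec_def using i0 lp lxy i_def by (intro exI[of _ i]) auto
            thus ?thesis ..
          next
            case False
            then obtain u v where uv: "u \<in> set xs" "v \<in> set ys" "\<not> u < v" by blast
            have vu: "v < u" using uv disj by (metis linorder_neqE_nat)
            obtain p where p: "p < length xs" "xs ! p = u" using uv(1) by (meson in_set_conv_nth)
            obtain q where q: "q < length ys" "ys ! q = v" using uv(2) by (meson in_set_conv_nth)
            have tk: "take k (xs @ ys) = xs @ take (k - i) ys" using kgt i_def by simp
            have dk: "drop k (xs @ ys) = drop (k - i) ys" using kgt i_def by simp
            have k3: "set xs \<union> set (take (k - i) ys) = {1..k}" using k(3) unfolding tk by simp
            have td: "set (take k (xs @ ys)) \<inter> set (drop k (xs @ ys)) = {}"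
              using set_take_disj_set_drop_if_distinct[OF dxy, of k k] by simp
            have bigd: "\<And>w. w \<in> set (drop (k - i) ys) \<Longrightarrow> k < w"
            proof -
              fix w assume w: "w \<in> set (drop (k - i) ys)"
              hence "w \<in> set (xs @ ys)" by (auto dest: in_set_dropD)
              moreover have "w \<in> set (drop k (xs @ ys))" unfolding dk using w .
              hence "w \<notin> {1..k}" using td k(3) by blast
              ultimately show "k < w" using sxy by auto
            qed
            have uk: "u \<le> k" using k3 uv(1) by auto
            have qk: "q < k - i"
            proof (rule ccontr)
              assume "\<not> q < k - i"
              hence "v \<in> set (drop (k - i) ys)" using q
                by (metis nth_in_drop not_less)
              thus False using bigd uk vu by fastforce
            qed
            have ki: "k - i < length ys" using k(2) lxy i_def kgt by simp
            define b where "b = ys ! (k - i)"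
            have "b \<in> set (drop (k - i) ys)" using ki unfolding b_def by (simp add: nth_in_drop)
            hence bk: "k < b" by (rule bigd)
            have "b \<in> set ys" using ki b_def by simp
            hence bm: "b < Suc m" using suby by auto
            have n1: "\<pi> ! p = u" "\<pi> ! i = Suc m" "\<pi> ! (i + 1 + q) = v" "\<pi> ! (i + 1 + (k - i)) = b"
              using p q i_def pxy b_def by (auto simp: nth_append)
            have "contains_pattern [2,4,1,3] \<pi>"
              by (rule c2413[of p i "i + 1 + q" "i + 1 + (k - i)" \<pi>]) (use p i_def qk ki lxy lp vu uk bk bm n1 in auto)
            thus ?thesis using Suc.prems(2) by (simp add: avoids_def)
          qed
        qed
      next
        assume "mdec (xs @ ys)"
        then obtain k where k: "0 < k" "k < m" "set (take k (xs @ ys)) = {m - k + 1..m}"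
          unfolding mdec_def using lxy by auto
        show ?thesis
        proof (cases "i \<le> k")
          case True
          have "take (k + 1) \<pi> = xs @ Suc m # take (k - i) ys" using pxy True i_def by (simp add: Suc_diff_le)
          moreover have "take k (xs @ ys) = xs @ take (k - i) ys" using True i_def by simp
          ultimately have "set (take (k + 1) \<pi>) = {m - k + 1..m} \<union> {Suc m}" using k(3) by auto
          also have "\<dots> = {Suc m - (k + 1) + 1..Suc m}" using k by auto
          finally have "mdec \<pi>" unfolding mdec_def using k lp by (intro exI[of _ "k+1"]) auto
          thus ?thesis ..
        next
          case igt: False
          show ?thesis
          proof (cases "\<forall>u\<in>set xs. \<forall>v\<in>set ys. v < u")
            case True
            have "set ys = {1..card (set ys)}"
              by (rule low_set[of _ "set xs" m]) (use True sxy in auto)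
            hence sy: "set ys = {1..length ys}" using distinct_card[of ys] dxy by simp
            have "set (take (i + 1) \<pi>) = set xs \<union> {Suc m}" using pxy i_def by simp
            also have "set xs = {1..m} - set ys" using sxy disj by auto
            also have "({1..m} - set ys) \<union> {Suc m} = {Suc m - (i + 1) + 1..Suc m}"
              using sy lxy i_def by auto
            finally have "mdec \<pi>" unfolding mdec_def using lp lxy i_def yne
              by (intro exI[of _ "i+1"]) auto
            thus ?thesis ..
          next
            case False
            then obtain u v where uv: "u \<in> set xs" "v \<in> set ys" "\<not> v < u" by blast
            have vu: "u < v" using uv disj by (metis linorder_neqE_nat)
            obtain p where p: "p < length xs" "xs ! p = u" using uv(1) by (meson in_set_conv_nth)
            obtain q where q: "q < length ys" "ys ! q = v" using uv(2) by (meson in_set_conv_nth)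
            have tk: "take k (xs @ ys) = take k xs" using igt i_def by simp
            have k3: "set (take k xs) = {m - k + 1..m}" using k(3) unfolding tk .
            have td: "set (take k (xs @ ys)) \<inter> set (drop k (xs @ ys)) = {}"
              using set_take_disj_set_drop_if_distinct[OF dxy, of k k] by simp
            have "v \<in> set (drop k (xs @ ys))" using igt i_def uv(2) by simp
            hence vnot: "v \<notin> {m - k + 1..m}" using td k(3) by blast
            have vsm: "v \<le> m - k" using vnot uv(2) suby by auto
            have pk: "k \<le> p"
            proof (rule ccontr)
              assume "\<not> k \<le> p"
              hence "u \<in> set (take k xs)" using p nth_mem[of p "take k xs"] by simp
              hence "m - k + 1 \<le> u" using k3 by auto
              thus False using vsm vu by linarith
            qed
            define a where "a = xs ! 0"
            have "a \<in> set (take k xs)" using nth_mem[of 0 "take k xs"] k(1) xne unfolding a_def by simp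
            hence "m - k + 1 \<le> a" using k3 by auto
            hence va: "v < a" using vsm by linarith
            have "a \<in> set xs" using nth_mem[of 0 xs] xne unfolding a_def by simp
            hence am: "a < Suc m" using subx by auto
            have n1: "\<pi> ! 0 = a" "\<pi> ! p = u" "\<pi> ! i = Suc m" "\<pi> ! (i + 1 + q) = v"
              using p q i_def pxy a_def xne by (auto simp: nth_append)
            have "contains_pattern [3,1,4,2] \<pi>"
              by (rule c3142[of 0 p i "i + 1 + q" \<pi>]) (use p i_def pk k(1) q lxy lp vu va am n1 in auto)
            thus ?thesis using Suc.prems(3) by (simp add: avoids_def)
          qed
        qed
      qed
    qed
  qed
qed



definition shift :: "nat \<Rightarrow> nat list \<Rightarrow> nat list" where "shift k xs = map (\<lambda>x. x + k) xs"
definition dsum :: "nat list \<Rightarrow> nat list \<Rightarrow> nat list" where "dsum \<sigma> \<tau> = \<sigma> @ shift (length \<sigma>) \<tau>"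
definition ssum :: "nat list \<Rightarrow> nat list \<Rightarrow> nat list" where "ssum \<sigma> \<tau> = shift (length \<tau>) \<sigma> @ \<tau>"
definition av :: "nat list \<Rightarrow> bool" where "av \<pi> \<longleftrightarrow> avoids \<pi> [2,4,1,3] \<and> avoids \<pi> [3,1,4,2]"

lemma sep_iff: "\<pi> \<in> sep_perms n \<longleftrightarrow> set \<pi> = {1..n} \<and> distinct \<pi> \<and> av \<pi>"
  by (auto simp: sep_perms_def av_def perm_iff)

lemma sep_len: "\<pi> \<in> sep_perms n \<Longrightarrow> length \<pi> = n"
  by (auto simp: sep_iff dest: distinct_card)

lemma contains_map_iff:
  assumes g: "\<And>u v. u \<in> set xs \<Longrightarrow> v \<in> set xs \<Longrightarrow> g u < g v \<longleftrightarrow> u < v"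
  shows "contains_pattern p (map g xs) \<longleftrightarrow> contains_pattern p xs"
proof -
  have "\<And>ix. (\<forall>k<length ix. ix ! k < length xs) \<Longrightarrow>
     (\<forall>a<length ix. \<forall>b<length ix. (map g xs ! (ix ! a) < map g xs ! (ix ! b)) \<longleftrightarrow> (p ! a < p ! b)) \<longleftrightarrow>
     (\<forall>a<length ix. \<forall>b<length ix. (xs ! (ix ! a) < xs ! (ix ! b)) \<longleftrightarrow> (p ! a < p ! b))"
    using g by (auto intro: nth_mem)
  thus ?thesis unfolding contains_pattern_def length_map
    by (intro iff_exI) blast
qed

lemma av_map: "(\<And>u v. u \<in> set xs \<Longrightarrow> v \<in> set xs \<Longrightarrow> g u < g v \<longleftrightarrow> u < v) \<Longrightarrow> av (map g xs) \<longleftrightarrow> av xs"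
  unfolding av_def avoids_def using contains_map_iff by metis

lemma av_shift[simp]: "av (shift k xs) \<longleftrightarrow> av xs"
  unfolding shift_def by (rule av_map) auto

lemma av_take: "av \<pi> \<Longrightarrow> av (take k \<pi>)"
proof -
  have "contains_pattern p \<pi>" if c: "contains_pattern p (take k \<pi>)" for p
    by (rule contains_embed[OF c, where f = id and g = id]) (auto simp: strict_mono_def)
  thus "av \<pi> \<Longrightarrow> av (take k \<pi>)" unfolding av_def avoids_def by blast
qed

lemma av_drop: "av \<pi> \<Longrightarrow> av (drop k \<pi>)"
proof -
  have "contains_pattern p (drop k \<pi>) \<Longrightarrow> contains_pattern p \<pi>" for p
    by (rule contains_embed[where f = "\<lambda>j. k + j" and g = id]) (auto simp: strict_mono_def)
  thus "av \<pi> \<Longrightarrow> av (drop k \<pi>)" unfolding av_def avoids_def by blast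
qed

lemma av_append:
  assumes "av xs" "av ys" "\<And>u v. u \<in> set xs \<Longrightarrow> v \<in> set ys \<Longrightarrow> (u < v) = cc"
  shows "av (xs @ ys)"
  using assms contains_split[OF _ ind2413, of xs ys cc] contains_split[OF _ ind3142, of xs ys cc]
  unfolding av_def avoids_def by blast

lemma dsum_sep:
  assumes "\<sigma> \<in> sep_perms j" "\<tau> \<in> sep_perms m"
  shows "dsum \<sigma> \<tau> \<in> sep_perms (j + m)" "des (dsum \<sigma> \<tau>) = des \<sigma> + des \<tau>"
proof -
  have s: "set \<sigma> = {1..j}" "distinct \<sigma>" "av \<sigma>" "set \<tau> = {1..m}" "distinct \<tau>" "av \<tau>"
    and l: "length \<sigma> = j" using assms by (auto simp: sep_iff sep_len)
  have st: "set (shift j \<tau>) = {j+1..j+m}" using s by (auto simp: shift_def)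
  show "dsum \<sigma> \<tau> \<in> sep_perms (j + m)"
    unfolding sep_iff dsum_def l
  proof (intro conjI)
    show "set (\<sigma> @ shift j \<tau>) = {1..j + m}" using s st by auto
    show "distinct (\<sigma> @ shift j \<tau>)" using s st by (auto simp: shift_def distinct_map inj_on_def)
    show "av (\<sigma> @ shift j \<tau>)" by (rule av_append[where cc=True]) (use s st in auto)
  qed
  have "des (shift j \<tau>) = des \<tau>" unfolding shift_def by (rule des_map) auto
  moreover have "\<sigma> \<noteq> [] \<Longrightarrow> shift j \<tau> \<noteq> [] \<Longrightarrow> \<not> hd (shift j \<tau>) < last \<sigma>"
  proof -
    assume a: "\<sigma> \<noteq> []" "shift j \<tau> \<noteq> []"
    have "hd (shift j \<tau>) \<in> {j+1..j+m}" using st a hd_in_set by blast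
    moreover have "last \<sigma> \<in> {1..j}" using s a last_in_set by blast
    ultimately show ?thesis by auto
  qed
  ultimately show "des (dsum \<sigma> \<tau>) = des \<sigma> + des \<tau>" unfolding dsum_def l des_append by auto
qed

lemma ssum_sep:
  assumes "\<sigma> \<in> sep_perms j" "\<tau> \<in> sep_perms m" "0 < j" "0 < m"
  shows "ssum \<sigma> \<tau> \<in> sep_perms (j + m)" "des (ssum \<sigma> \<tau>) = des \<sigma> + des \<tau> + 1"
proof -
  have s: "set \<sigma> = {1..j}" "distinct \<sigma>" "av \<sigma>" "set \<tau> = {1..m}" "distinct \<tau>" "av \<tau>"
    and l: "length \<tau> = m" using assms by (auto simp: sep_iff sep_len)
  have st: "set (shift m \<sigma>) = {m+1..j+m}" using s by (auto simp: shift_def)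
  show "ssum \<sigma> \<tau> \<in> sep_perms (j + m)"
    unfolding sep_iff ssum_def l
  proof (intro conjI)
    show "set (shift m \<sigma> @ \<tau>) = {1..j + m}" using s st by auto
    show "distinct (shift m \<sigma> @ \<tau>)" using s st by (auto simp: shift_def distinct_map inj_on_def)
    show "av (shift m \<sigma> @ \<tau>)" by (rule av_append[where cc=False]) (use s st in auto)
  qed
  have "des (shift m \<sigma>) = des \<sigma>" unfolding shift_def by (rule des_map) auto
  moreover have ne: "shift m \<sigma> \<noteq> []" "\<tau> \<noteq> []" using s assms st by auto
  moreover have "hd \<tau> < last (shift m \<sigma>)"
  proof -
    have "hd \<tau> \<in> {1..m}" using s ne hd_in_set by blast
    moreover have "last (shift m \<sigma>) \<in> {m+1..j+m}" using st ne last_in_set by blast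
    ultimately show ?thesis by auto
  qed
  ultimately show "des (ssum \<sigma> \<tau>) = des \<sigma> + des \<tau> + 1" unfolding ssum_def l des_append by auto
qed


definition IP :: "nat \<Rightarrow> nat list set" where "IP m = {\<pi> \<in> sep_perms m. \<not> pdec \<pi>}"
definition IM :: "nat \<Rightarrow> nat list set" where "IM m = {\<pi> \<in> sep_perms m. \<not> mdec \<pi>}"
definition pset :: "nat list \<Rightarrow> nat set" where
  "pset \<pi> = {k. 0 < k \<and> k < length \<pi> \<and> set (take k \<pi>) = {1..k}}"
definition mset' :: "nat list \<Rightarrow> nat set" where
  "mset' \<pi> = {k. 0 < k \<and> k < length \<pi> \<and> set (take k \<pi>) = {length \<pi> - k + 1..length \<pi>}}"

lemma finite_pset: "finite (pset \<pi>)"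
  by (rule finite_subset[of _ "{..<length \<pi>}"]) (auto simp: pset_def)
lemma finite_mset': "finite (mset' \<pi>)"
  by (rule finite_subset[of _ "{..<length \<pi>}"]) (auto simp: mset'_def)

lemma finite_sep: "finite (sep_perms n)"
  by (rule finite_subset[OF _ finite_permutations_of_set[of "{1..n}"]]) (auto simp: sep_perms_def)

lemma dsum_pset:
  assumes "\<sigma> \<in> sep_perms j" "\<tau> \<in> IP m" "0 < j" "0 < m"
  shows "j \<in> pset (dsum \<sigma> \<tau>)" "Max (pset (dsum \<sigma> \<tau>)) = j"
proof -
  have s: "set \<sigma> = {1..j}" "set \<tau> = {1..m}" and l: "length \<sigma> = j" "length \<tau> = m"
    and np: "\<not> pdec \<tau>" using assms by (auto simp: IP_def sep_iff sep_len)
  have ld: "length (dsum \<sigma> \<tau>) = j + m" using l by (simp add: dsum_def shift_def)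
  show jin: "j \<in> pset (dsum \<sigma> \<tau>)" using s l ld assms(3,4) by (simp add: pset_def dsum_def)
  have "k \<le> j" if k: "k \<in> pset (dsum \<sigma> \<tau>)" for k
  proof (rule ccontr)
    assume kj: "\<not> k \<le> j"
    have tk: "take k (dsum \<sigma> \<tau>) = \<sigma> @ shift j (take (k - j) \<tau>)"
      using kj l by (simp add: dsum_def shift_def take_map)
    have k3: "set (take k (dsum \<sigma> \<tau>)) = {1..k}" and kl: "k < j + m" using k ld by (auto simp: pset_def)
    define A where "A = set (take (k - j) \<tau>)"
    have A1: "A \<subseteq> {1..m}" using s unfolding A_def by (metis set_take_subset)
    have U: "{1..j} \<union> (\<lambda>x. x + j) ` A = {1..k}" using k3 unfolding tk A_def by (simp add: shift_def s(1))
    have "A = {1..k - j}"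
    proof (intro set_eqI iffI)
      fix x assume "x \<in> A"
      hence "x + j \<in> {1..k}" "1 \<le> x" using U A1 by auto
      thus "x \<in> {1..k - j}" by auto
    next
      fix x assume x: "x \<in> {1..k - j}"
      hence "x + j \<in> {1..k} - {1..j}" using kj by auto
      hence "x + j \<in> (\<lambda>x. x + j) ` A" using U by blast
      thus "x \<in> A" by auto
    qed
    hence "pdec \<tau>" unfolding pdec_def A_def using kj kl l by (intro exI[of _ "k - j"]) auto
    thus False using np by simp
  qed
  thus "Max (pset (dsum \<sigma> \<tau>)) = j" using jin finite_pset by (intro Max_eqI) auto
qed

lemma pd_decomp:
  assumes "\<pi> \<in> sep_perms n" "pdec \<pi>"
  defines "k \<equiv> Max (pset \<pi>)"
  shows "0 < k" "k < n" "take k \<pi> \<in> sep_perms k" "map (\<lambda>x. x - k) (drop k \<pi>) \<in> IP (n - k)"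
        "dsum (take k \<pi>) (map (\<lambda>x. x - k) (drop k \<pi>)) = \<pi>"
proof -
  have s: "set \<pi> = {1..n}" "distinct \<pi>" "av \<pi>" and l: "length \<pi> = n"
    using assms(1) by (auto simp: sep_iff sep_len)
  have "pset \<pi> \<noteq> {}" using assms(2) by (auto simp: pdec_def pset_def)
  hence kin: "k \<in> pset \<pi>" unfolding k_def using finite_pset Max_in by blast
  hence k: "0 < k" "k < n" "set (take k \<pi>) = {1..k}" using l by (auto simp: pset_def)
  thus "0 < k" "k < n" by auto
  have dis: "set (take k \<pi>) \<inter> set (drop k \<pi>) = {}"
    using set_take_disj_set_drop_if_distinct[OF s(2), of k k] by simp
  have un: "set (take k \<pi>) \<union> set (drop k \<pi>) = {1..n}"
    using s(1) by (metis append_take_drop_id set_append)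
  have "set (drop k \<pi>) = {1..n} - {1..k}" using dis un k(3) by blast
  also have "\<dots> = {k+1..n}" by auto
  finally have dset: "set (drop k \<pi>) = {k+1..n}" .
  define \<tau> where "\<tau> = map (\<lambda>x. x - k) (drop k \<pi>)"
  have ordp: "\<And>u v. u \<in> set (drop k \<pi>) \<Longrightarrow> v \<in> set (drop k \<pi>) \<Longrightarrow> (u - k < v - k) = (u < v)"
    using dset by auto
  have tset: "set \<tau> = {1..n - k}"
  proof -
    have "set \<tau> = (\<lambda>x. x - k) ` {k+1..n}" unfolding \<tau>_def using dset by simp
    also have "\<dots> = {1..n - k}"
    proof (intro set_eqI iffI)
      fix x assume "x \<in> {1..n - k}" thus "x \<in> (\<lambda>x. x - k) ` {k+1..n}"
        by (intro image_eqI[of _ _ "x + k"]) auto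
    qed auto
    finally show ?thesis .
  qed
  have tdist: "distinct \<tau>" unfolding \<tau>_def using s(2) dset
    by (auto simp: distinct_map inj_on_def intro!: distinct_drop)
  have tav: "av \<tau>" unfolding \<tau>_def using av_map[of "drop k \<pi>" "\<lambda>x. x - k"] ordp av_drop[OF s(3)] by blast
  show "take k \<pi> \<in> sep_perms k" using k s by (auto simp: sep_iff av_take)
  have nt: "\<not> pdec \<tau>"
  proof
    assume "pdec \<tau>"
    then obtain q where q: "0 < q" "q < n - k" "set (take q \<tau>) = {1..q}"
      using tset tdist unfolding pdec_def by (auto dest: distinct_card)
    define B where "B = set (take q (drop k \<pi>))"
    have B1: "B \<subseteq> {k+1..n}" using dset unfolding B_def by (metis set_take_subset)
    have B2: "(\<lambda>x. x - k) ` B = {1..q}" using q(3) unfolding B_def \<tau>_def by (simp add: take_map)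
    have B3: "B = {k+1..k+q}"
    proof (intro set_eqI iffI)
      fix x assume "x \<in> B"
      hence "x - k \<in> {1..q}" "k + 1 \<le> x" using B1 B2 by auto
      thus "x \<in> {k+1..k+q}" by auto
    next
      fix x assume x: "x \<in> {k+1..k+q}"
      hence "x - k \<in> {1..q}" by auto
      then obtain y where y: "y \<in> B" "y - k = x - k" using B2 by (metis imageE)
      hence "y = x" using B1 x by auto
      thus "x \<in> B" using y by simp
    qed
    have "take (k + q) \<pi> = take k \<pi> @ take q (drop k \<pi>)" by (simp add: take_add)
    hence "set (take (k + q) \<pi>) = {1..k + q}" using k(3) B3 unfolding B_def by auto
    hence "k + q \<in> pset \<pi>" using q k l by (simp add: pset_def)
    hence "k + q \<le> k" unfolding k_def using finite_pset by (rule Max_ge[rotated])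
    thus False using q by simp
  qed
  show "map (\<lambda>x. x - k) (drop k \<pi>) \<in> IP (n - k)"
    using tset tdist tav nt unfolding \<tau>_def IP_def by (simp add: sep_iff)
  have lt: "length (take k \<pi>) = k" using k l by simp
  have "shift k \<tau> = drop k \<pi>" unfolding shift_def \<tau>_def using dset
    by (auto intro!: map_idI)
  thus "dsum (take k \<pi>) (map (\<lambda>x. x - k) (drop k \<pi>)) = \<pi>" unfolding dsum_def lt \<tau>_def[symmetric] by simp
qed


lemma ssum_mset:
  assumes "\<sigma> \<in> sep_perms j" "\<tau> \<in> IM m" "0 < j" "0 < m"
  shows "j \<in> mset' (ssum \<sigma> \<tau>)" "Max (mset' (ssum \<sigma> \<tau>)) = j"
proof -
  have s: "set \<sigma> = {1..j}" "set \<tau> = {1..m}" and l: "length \<sigma> = j" "length \<tau> = m"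
    and np: "\<not> mdec \<tau>" using assms by (auto simp: IM_def sep_iff sep_len)
  have ld: "length (ssum \<sigma> \<tau>) = j + m" using l by (simp add: ssum_def shift_def)
  have st: "set (shift m \<sigma>) = {m+1..j+m}" using s by (auto simp: shift_def)
  have tj: "take j (ssum \<sigma> \<tau>) = shift m \<sigma>" using l by (simp add: ssum_def shift_def)
  show jin: "j \<in> mset' (ssum \<sigma> \<tau>)" unfolding mset'_def ld using tj st assms(3,4)
    by (simp add: add.commute)
  have "k \<le> j" if k: "k \<in> mset' (ssum \<sigma> \<tau>)" for k
  proof (rule ccontr)
    assume kj: "\<not> k \<le> j"
    have tk: "take k (ssum \<sigma> \<tau>) = shift m \<sigma> @ take (k - j) \<tau>"
      using kj l by (simp add: ssum_def shift_def)
    have k3: "set (take k (ssum \<sigma> \<tau>)) = {j + m - k + 1..j + m}" and kl: "k < j + m"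
      using k ld by (auto simp: mset'_def)
    define A where "A = set (take (k - j) \<tau>)"
    have A1: "A \<subseteq> {1..m}" using s unfolding A_def by (metis set_take_subset)
    have U: "{m+1..j+m} \<union> A = {j + m - k + 1..j + m}" using k3 unfolding tk A_def using st by simp
    have "A = {m - (k - j) + 1..m}"
    proof (intro set_eqI iffI)
      fix x assume "x \<in> A"
      hence "x \<in> {j + m - k + 1..j + m}" "x \<le> m" using U A1 by auto
      thus "x \<in> {m - (k - j) + 1..m}" using kj kl by auto
    next
      fix x assume x: "x \<in> {m - (k - j) + 1..m}"
      hence "x \<in> {j + m - k + 1..j + m} - {m+1..j+m}" using kj kl by auto
      thus "x \<in> A" using U by blast
    qed
    hence "mdec \<tau>" unfolding mdec_def A_def using kj kl l by (intro exI[of _ "k - j"]) auto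
    thus False using np by simp
  qed
  thus "Max (mset' (ssum \<sigma> \<tau>)) = j" using jin finite_mset' by (intro Max_eqI) auto
qed

lemma md_decomp:
  assumes "\<pi> \<in> sep_perms n" "mdec \<pi>"
  defines "k \<equiv> Max (mset' \<pi>)"
  shows "0 < k" "k < n" "map (\<lambda>x. x - (n - k)) (take k \<pi>) \<in> sep_perms k" "drop k \<pi> \<in> IM (n - k)"
        "ssum (map (\<lambda>x. x - (n - k)) (take k \<pi>)) (drop k \<pi>) = \<pi>"
proof -
  have s: "set \<pi> = {1..n}" "distinct \<pi>" "av \<pi>" and l: "length \<pi> = n"
    using assms(1) by (auto simp: sep_iff sep_len)
  have "mset' \<pi> \<noteq> {}" using assms(2) by (auto simp: mdec_def mset'_def)
  hence kin: "k \<in> mset' \<pi>" unfolding k_def using finite_mset' Max_in by blast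
  hence k: "0 < k" "k < n" "set (take k \<pi>) = {n - k + 1..n}" using l by (auto simp: mset'_def)
  thus "0 < k" "k < n" by auto
  have dis: "set (take k \<pi>) \<inter> set (drop k \<pi>) = {}"
    using set_take_disj_set_drop_if_distinct[OF s(2), of k k] by simp
  have un: "set (take k \<pi>) \<union> set (drop k \<pi>) = {1..n}"
    using s(1) by (metis append_take_drop_id set_append)
  have "set (drop k \<pi>) = {1..n} - {n - k + 1..n}" using dis un k(3) by blast
  also have "\<dots> = {1..n-k}" by auto
  finally have dset: "set (drop k \<pi>) = {1..n-k}" .
  define \<sigma> where "\<sigma> = map (\<lambda>x. x - (n - k)) (take k \<pi>)"
  have ordp: "\<And>u v. u \<in> set (take k \<pi>) \<Longrightarrow> v \<in> set (take k \<pi>) \<Longrightarrow> (u - (n - k) < v - (n - k)) = (u < v)"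
    using k(3) by auto
  have sset: "set \<sigma> = {1..k}"
  proof -
    have "set \<sigma> = (\<lambda>x. x - (n - k)) ` {n - k + 1..n}" unfolding \<sigma>_def using k(3) by simp
    also have "\<dots> = {1..k}"
    proof (intro set_eqI iffI)
      fix x assume "x \<in> {1..k}" thus "x \<in> (\<lambda>x. x - (n - k)) ` {n - k + 1..n}"
        using k(2) by (intro image_eqI[of _ _ "x + (n - k)"]) auto
    qed (use k(2) in auto)
    finally show ?thesis .
  qed
  have sdist: "distinct \<sigma>" unfolding \<sigma>_def using s(2) k(3)
    by (auto simp: distinct_map inj_on_def intro!: distinct_take)
  have sav: "av \<sigma>" unfolding \<sigma>_def using av_map[of "take k \<pi>" "\<lambda>x. x - (n - k)"] ordp av_take[OF s(3)] by blast
  show "map (\<lambda>x. x - (n - k)) (take k \<pi>) \<in> sep_perms k"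
    using sset sdist sav unfolding \<sigma>_def by (simp add: sep_iff)
  have ldr: "length (drop k \<pi>) = n - k" using l by simp
  have nt: "\<not> mdec (drop k \<pi>)"
  proof
    assume "mdec (drop k \<pi>)"
    then obtain q where q: "0 < q" "q < n - k" "set (take q (drop k \<pi>)) = {n - k - q + 1..n - k}"
      using ldr l unfolding mdec_def by auto
    have "take (k + q) \<pi> = take k \<pi> @ take q (drop k \<pi>)" by (simp add: take_add)
    hence "set (take (k + q) \<pi>) = {n - k + 1..n} \<union> {n - k - q + 1..n - k}" using k(3) q(3) by simp
    also have "\<dots> = {n - (k + q) + 1..n}" using q k by auto
    finally have "k + q \<in> mset' \<pi>" using q k l by (simp add: mset'_def)
    hence "k + q \<le> k" unfolding k_def using finite_mset' by (rule Max_ge[rotated])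
    thus False using q by simp
  qed
  show "drop k \<pi> \<in> IM (n - k)"
    using dset nt s av_drop unfolding IM_def by (simp add: sep_iff)
  have "shift (n - k) \<sigma> = take k \<pi>" unfolding shift_def \<sigma>_def using k(3)
    by (auto intro!: map_idI)
  thus "ssum (map (\<lambda>x. x - (n - k)) (take k \<pi>)) (drop k \<pi>) = \<pi>" unfolding ssum_def ldr \<sigma>_def[symmetric] by simp
qed


definition pinv :: "nat list \<Rightarrow> nat \<times> nat list \<times> nat list" where
  "pinv \<pi> = (Max (pset \<pi>), take (Max (pset \<pi>)) \<pi>, map (\<lambda>x. x - Max (pset \<pi>)) (drop (Max (pset \<pi>)) \<pi>))"
definition minv :: "nat list \<Rightarrow> nat \<times> nat list \<times> nat list" where
  "minv \<pi> = (Max (mset' \<pi>), map (\<lambda>x. x - (length \<pi> - Max (mset' \<pi>))) (take (Max (mset' \<pi>)) \<pi>), drop (Max (mset' \<pi>)) \<pi>)"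

lemma dsum_inv:
  assumes "\<sigma> \<in> sep_perms j" "\<tau> \<in> IP m" "0 < j" "0 < m"
  shows "pinv (dsum \<sigma> \<tau>) = (j, \<sigma>, \<tau>)"
proof -
  have l: "length \<sigma> = j" using assms(1) by (simp add: sep_len)
  have "map (\<lambda>x. x - j) (shift j \<tau>) = \<tau>" by (simp add: shift_def comp_def)
  thus ?thesis using dsum_pset(2)[OF assms] l by (simp add: pinv_def dsum_def)
qed

lemma ssum_inv:
  assumes "\<sigma> \<in> sep_perms j" "\<tau> \<in> IM m" "0 < j" "0 < m"
  shows "minv (ssum \<sigma> \<tau>) = (j, \<sigma>, \<tau>)"
proof -
  have l: "length \<sigma> = j" "length \<tau> = m" using assms(1,2) by (auto simp: sep_len IM_def)
  have ld: "length (ssum \<sigma> \<tau>) = j + m" using l by (simp add: ssum_def shift_def)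
  have "map (\<lambda>x. x - m) (shift m \<sigma>) = \<sigma>" by (simp add: shift_def comp_def)
  thus ?thesis using ssum_mset(2)[OF assms] l ld by (simp add: minv_def ssum_def shift_def)
qed

lemma bij_P:
  "bij_betw (\<lambda>(j, \<sigma>, \<tau>). dsum \<sigma> \<tau>) (SIGMA j:{1..n-1}. sep_perms j \<times> IP (n - j)) {\<pi> \<in> sep_perms n. pdec \<pi>}"
proof (rule bij_betw_byWitness[where f' = pinv])
  show "\<forall>a\<in>SIGMA j:{1..n - 1}. sep_perms j \<times> IP (n - j). pinv (case a of (j, \<sigma>, \<tau>) \<Rightarrow> dsum \<sigma> \<tau>) = a"
    by (auto intro!: dsum_inv)
  show "\<forall>a'\<in>{\<pi> \<in> sep_perms n. pdec \<pi>}. (case pinv a' of (j, \<sigma>, \<tau>) \<Rightarrow> dsum \<sigma> \<tau>) = a'"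
    using pd_decomp(5) by (auto simp: pinv_def)
  show "(\<lambda>(j, \<sigma>, \<tau>). dsum \<sigma> \<tau>) ` (SIGMA j:{1..n - 1}. sep_perms j \<times> IP (n - j)) \<subseteq> {\<pi> \<in> sep_perms n. pdec \<pi>}"
  proof clarify
    fix j \<sigma> \<tau> assume a: "j \<in> {1..n-1}" "\<sigma> \<in> sep_perms j" "\<tau> \<in> IP (n - j)"
    have "dsum \<sigma> \<tau> \<in> sep_perms (j + (n - j))" using a(2,3) by (intro dsum_sep) (auto simp: IP_def)
    moreover have "j \<in> pset (dsum \<sigma> \<tau>)" using a by (intro dsum_pset) auto
    ultimately show "dsum \<sigma> \<tau> \<in> sep_perms n \<and> pdec (dsum \<sigma> \<tau>)" using a(1)
      by (auto simp: pdec_def pset_def)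
  qed
  show "pinv ` {\<pi> \<in> sep_perms n. pdec \<pi>} \<subseteq> (SIGMA j:{1..n - 1}. sep_perms j \<times> IP (n - j))"
    using pd_decomp(1-4) by (fastforce simp: pinv_def)
qed

lemma bij_M:
  "bij_betw (\<lambda>(j, \<sigma>, \<tau>). ssum \<sigma> \<tau>) (SIGMA j:{1..n-1}. sep_perms j \<times> IM (n - j)) {\<pi> \<in> sep_perms n. mdec \<pi>}"
proof (rule bij_betw_byWitness[where f' = minv])
  show "\<forall>a\<in>SIGMA j:{1..n - 1}. sep_perms j \<times> IM (n - j). minv (case a of (j, \<sigma>, \<tau>) \<Rightarrow> ssum \<sigma> \<tau>) = a"
    by (auto intro!: ssum_inv)
  show "\<forall>a'\<in>{\<pi> \<in> sep_perms n. mdec \<pi>}. (case minv a' of (j, \<sigma>, \<tau>) \<Rightarrow> ssum \<sigma> \<tau>) = a'"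
    using md_decomp(5) by (auto simp: minv_def sep_len)
  show "(\<lambda>(j, \<sigma>, \<tau>). ssum \<sigma> \<tau>) ` (SIGMA j:{1..n - 1}. sep_perms j \<times> IM (n - j)) \<subseteq> {\<pi> \<in> sep_perms n. mdec \<pi>}"
  proof clarify
    fix j \<sigma> \<tau> assume a: "j \<in> {1..n-1}" "\<sigma> \<in> sep_perms j" "\<tau> \<in> IM (n - j)"
    have "ssum \<sigma> \<tau> \<in> sep_perms (j + (n - j))" using a by (intro ssum_sep) (auto simp: IM_def)
    moreover have "j \<in> mset' (ssum \<sigma> \<tau>)" using a by (intro ssum_mset) auto
    ultimately show "ssum \<sigma> \<tau> \<in> sep_perms n \<and> mdec (ssum \<sigma> \<tau>)" using a(1)
      by (auto simp: mdec_def mset'_def)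
  qed
  show "minv ` {\<pi> \<in> sep_perms n. mdec \<pi>} \<subseteq> (SIGMA j:{1..n - 1}. sep_perms j \<times> IM (n - j))"
    using md_decomp(1-4) by (fastforce simp: minv_def sep_len)
qed


lemma sumP:
  "(\<Sum>\<pi>\<in>{\<pi> \<in> sep_perms n. pdec \<pi>}. t ^ des \<pi>) = (\<Sum>j=1..n-1. S j t * (\<Sum>\<tau>\<in>IP (n - j). t ^ des \<tau>))"
proof -
  have fin: "finite (IP m)" for m unfolding IP_def using finite_sep by simp
  have "(\<Sum>j=1..n-1. S j t * (\<Sum>\<tau>\<in>IP (n - j). t ^ des \<tau>))
      = (\<Sum>j=1..n-1. \<Sum>\<sigma>\<in>sep_perms j. \<Sum>\<tau>\<in>IP (n - j). t ^ des \<sigma> * t ^ des \<tau>)"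
    by (simp add: S_def sum_product)
  also have "\<dots> = (\<Sum>j=1..n-1. \<Sum>(\<sigma>, \<tau>)\<in>sep_perms j \<times> IP (n - j). t ^ des \<sigma> * t ^ des \<tau>)"
    by (simp add: sum.cartesian_product)
  also have "\<dots> = (\<Sum>(j, x)\<in>(SIGMA j:{1..n-1}. sep_perms j \<times> IP (n - j)). (case x of (\<sigma>, \<tau>) \<Rightarrow> t ^ des \<sigma> * t ^ des \<tau>))"
    by (rule sum.Sigma) (auto simp: finite_sep fin)
  also have "\<dots> = (\<Sum>x\<in>(SIGMA j:{1..n-1}. sep_perms j \<times> IP (n - j)). t ^ des ((\<lambda>(j, \<sigma>, \<tau>). dsum \<sigma> \<tau>) x))"
    by (rule sum.cong) (auto simp: dsum_sep IP_def power_add)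
  also have "\<dots> = (\<Sum>\<pi>\<in>{\<pi> \<in> sep_perms n. pdec \<pi>}. t ^ des \<pi>)"
    by (rule sum.reindex_bij_betw[OF bij_P])
  finally show ?thesis ..
qed

lemma sumM:
  "(\<Sum>\<pi>\<in>{\<pi> \<in> sep_perms n. mdec \<pi>}. t ^ des \<pi>) = t * (\<Sum>j=1..n-1. S j t * (\<Sum>\<tau>\<in>IM (n - j). t ^ des \<tau>))"
proof -
  have fin: "finite (IM m)" for m unfolding IM_def using finite_sep by simp
  have "t * (\<Sum>j=1..n-1. S j t * (\<Sum>\<tau>\<in>IM (n - j). t ^ des \<tau>))
      = t * (\<Sum>j=1..n-1. \<Sum>\<sigma>\<in>sep_perms j. \<Sum>\<tau>\<in>IM (n - j). t ^ des \<sigma> * t ^ des \<tau>)"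
    by (simp add: S_def sum_product)
  also have "\<dots> = (\<Sum>j=1..n-1. \<Sum>\<sigma>\<in>sep_perms j. \<Sum>\<tau>\<in>IM (n - j). t * (t ^ des \<sigma> * t ^ des \<tau>))"
    by (simp only: sum_distrib_left)
  also have "\<dots> = (\<Sum>j=1..n-1. \<Sum>\<sigma>\<in>sep_perms j. \<Sum>\<tau>\<in>IM (n - j). t ^ (des \<sigma> + des \<tau> + 1))"
    by (simp add: power_add mult_ac)
  also have "\<dots> = (\<Sum>j=1..n-1. \<Sum>(\<sigma>, \<tau>)\<in>sep_perms j \<times> IM (n - j). t ^ (des \<sigma> + des \<tau> + 1))"
    by (simp add: sum.cartesian_product)
  also have "\<dots> = (\<Sum>(j, x)\<in>(SIGMA j:{1..n-1}. sep_perms j \<times> IM (n - j)). (case x of (\<sigma>, \<tau>) \<Rightarrow> t ^ (des \<sigma> + des \<tau> + 1)))"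
    by (rule sum.Sigma) (auto simp: finite_sep fin)
  also have "\<dots> = (\<Sum>x\<in>(SIGMA j:{1..n-1}. sep_perms j \<times> IM (n - j)). t ^ des ((\<lambda>(j, \<sigma>, \<tau>). ssum \<sigma> \<tau>) x))"
    by (rule sum.cong) (auto simp: ssum_sep IM_def)
  also have "\<dots> = (\<Sum>\<pi>\<in>{\<pi> \<in> sep_perms n. mdec \<pi>}. t ^ des \<pi>)"
    by (rule sum.reindex_bij_betw[OF bij_M])
  finally show ?thesis ..
qed


lemma UNIV_sign: "(UNIV :: sign set) = {Plus, Minus}"
  using sign.exhaust by auto

lemma finite_nodes: "finite {T. nodes T = k}"
proof (induction k rule: less_induct)
  case (less k)
  show ?case
  proof (cases k)
    case 0
    have "{T. nodes T = k} = {Leaf}" using 0 by (auto elim: nodes.elims)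
    thus ?thesis by simp
  next
    case (Suc k')
    have "{T. nodes T = k} \<subseteq> (\<lambda>(l, s, r). Node l s r) ` (\<Union>j\<in>{..k'}. {l. nodes l = j} \<times> (UNIV :: sign set) \<times> {r. nodes r = k' - j})"
    proof
      fix T assume "T \<in> {T. nodes T = k}"
      then obtain l s r where T: "T = Node l s r" "nodes l + 1 + nodes r = Suc k'" using Suc
        by (cases T) auto
      thus "T \<in> (\<lambda>(l, s, r). Node l s r) ` (\<Union>j\<in>{..k'}. {l. nodes l = j} \<times> (UNIV :: sign set) \<times> {r. nodes r = k' - j})"
        by (intro image_eqI[of _ _ "(l, s, r)"]) auto
    qed
    moreover have "finite (\<Union>j\<in>{..k'}. {l. nodes l = j} \<times> (UNIV :: sign set) \<times> {r. nodes r = k' - j})"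
      using less.IH Suc by (intro finite_UN_I finite_cartesian_product) (auto simp: UNIV_sign)
    ultimately show ?thesis using finite_subset by blast
  qed
qed

lemma finite_DT: "finite (DT n)"
  unfolding DT_def by (rule finite_subset[OF _ finite_nodes[of "n - 1"]]) auto

definition tinv :: "stree \<Rightarrow> nat \<times> stree \<times> stree" where
  "tinv T = (case T of Node l _ r \<Rightarrow> (nodes l + 1, l, r) | Leaf \<Rightarrow> undefined)"

lemma bij_T:
  "bij_betw (\<lambda>(j, l, r). Node l s r) (SIGMA j:{1..n-1}. DT j \<times> {T \<in> DT (n - j). root_label T \<noteq> Some s})
     {T \<in> DT n. root_label T = Some s}"
proof (rule bij_betw_byWitness[where f' = tinv])
  show "\<forall>a\<in>SIGMA j:{1..n-1}. DT j \<times> {T \<in> DT (n - j). root_label T \<noteq> Some s}. tinv (case a of (j, l, r) \<Rightarrow> Node l s r) = a"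
    by (auto simp: tinv_def DT_def)
  show "\<forall>a'\<in>{T \<in> DT n. root_label T = Some s}. (case tinv a' of (j, l, r) \<Rightarrow> Node l s r) = a'"
  proof
    fix T assume "T \<in> {T \<in> DT n. root_label T = Some s}"
    thus "(case tinv T of (j, l, r) \<Rightarrow> Node l s r) = T" by (cases T) (auto simp: tinv_def)
  qed
  show "(\<lambda>(j, l, r). Node l s r) ` (SIGMA j:{1..n-1}. DT j \<times> {T \<in> DT (n - j). root_label T \<noteq> Some s})
     \<subseteq> {T \<in> DT n. root_label T = Some s}"
  proof clarify
    fix j l r assume a: "j \<in> {1..n-1}" "l \<in> DT j" "r \<in> DT (n - j)" "root_label r \<noteq> Some s"
    have "is_disk (Node l s r)" using a by (cases r) (auto simp: DT_def)
    thus "Node l s r \<in> DT n \<and> root_label (Node l s r) = Some s" using a by (auto simp: DT_def)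
  qed
  show "tinv ` {T \<in> DT n. root_label T = Some s} \<subseteq> (SIGMA j:{1..n-1}. DT j \<times> {T \<in> DT (n - j). root_label T \<noteq> Some s})"
  proof
    fix y assume "y \<in> tinv ` {T \<in> DT n. root_label T = Some s}"
    then obtain T where a: "T \<in> DT n" "root_label T = Some s" and y: "y = tinv T" by auto
    then obtain l r where T: "T = Node l s r" by (cases T) auto
    have d: "is_disk l" "is_disk r" "root_label r \<noteq> Some s" "nodes l + 1 + nodes r = n - 1"
      using a T by (auto simp: DT_def split: stree.splits)
    show "y \<in> (SIGMA j:{1..n-1}. DT j \<times> {T \<in> DT (n - j). root_label T \<noteq> Some s})"
      using d T y by (auto simp: tinv_def DT_def)
  qed
qed

definition D :: "nat \<Rightarrow> 'a::comm_semiring_1 \<Rightarrow> 'a" where "D n t = (\<Sum>T\<in>DT n. t ^ n_minus T)"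
definition R :: "sign \<Rightarrow> nat \<Rightarrow> 'a::comm_semiring_1 \<Rightarrow> 'a" where
  "R s n t = (\<Sum>T\<in>{T \<in> DT n. root_label T \<noteq> Some s}. t ^ n_minus T)"

lemma sumT:
  "(\<Sum>T\<in>{T \<in> DT n. root_label T = Some s}. t ^ n_minus T) = (if s = Minus then t else 1) * (\<Sum>j=1..n-1. D j t * R s (n - j) t)"
proof -
  let ?c = "(if s = Minus then t else 1)"
  have fin: "finite {T \<in> DT m. root_label T \<noteq> Some s}" for m using finite_DT by simp
  have "?c * (\<Sum>j=1..n-1. D j t * R s (n - j) t)
      = ?c * (\<Sum>j=1..n-1. \<Sum>l\<in>DT j. \<Sum>r\<in>{T \<in> DT (n - j). root_label T \<noteq> Some s}. t ^ n_minus l * t ^ n_minus r)"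
    by (simp add: D_def R_def sum_product)
  also have "\<dots> = (\<Sum>j=1..n-1. \<Sum>l\<in>DT j. \<Sum>r\<in>{T \<in> DT (n - j). root_label T \<noteq> Some s}. ?c * (t ^ n_minus l * t ^ n_minus r))"
    by (simp only: sum_distrib_left)
  also have "\<dots> = (\<Sum>j=1..n-1. \<Sum>(l, r)\<in>DT j \<times> {T \<in> DT (n - j). root_label T \<noteq> Some s}. ?c * (t ^ n_minus l * t ^ n_minus r))"
    by (simp add: sum.cartesian_product)
  also have "\<dots> = (\<Sum>(j, x)\<in>(SIGMA j:{1..n-1}. DT j \<times> {T \<in> DT (n - j). root_label T \<noteq> Some s}). (case x of (l, r) \<Rightarrow> ?c * (t ^ n_minus l * t ^ n_minus r)))"
    by (rule sum.Sigma) (auto simp: finite_DT fin)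
  also have "\<dots> = (\<Sum>x\<in>(SIGMA j:{1..n-1}. DT j \<times> {T \<in> DT (n - j). root_label T \<noteq> Some s}). t ^ n_minus ((\<lambda>(j, l, r). Node l s r) x))"
    by (rule sum.cong) (auto simp: power_add mult_ac)
  also have "\<dots> = (\<Sum>T\<in>{T \<in> DT n. root_label T = Some s}. t ^ n_minus T)"
    by (rule sum.reindex_bij_betw[OF bij_T])
  finally show ?thesis ..
qed


lemma excl: "\<pi> \<in> sep_perms n \<Longrightarrow> pdec \<pi> \<Longrightarrow> \<not> mdec \<pi>"
proof
  assume a: "\<pi> \<in> sep_perms n" "pdec \<pi>" "mdec \<pi>"
  have l: "length \<pi> = n" using a(1) by (rule sep_len)
  obtain k1 where k1: "0 < k1" "k1 < n" "set (take k1 \<pi>) = {1..k1}" using a(2) l by (auto simp: pdec_def)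
  obtain k2 where k2: "0 < k2" "k2 < n" "set (take k2 \<pi>) = {n - k2 + 1..n}" using a(3) l by (auto simp: mdec_def)
  show False
  proof (cases "k1 \<le> k2")
    case True
    hence "{1..k1} \<subseteq> {n - k2 + 1..n}" using k1(3) k2(3) set_take_subset_set_take by metis
    thus False using k1 k2 by auto
  next
    case False
    hence "{n - k2 + 1..n} \<subseteq> {1..k1}" using k1(3) k2(3) set_take_subset_set_take
      by (metis nat_le_linear)
    thus False using k1 k2 by auto
  qed
qed

lemma sep_pm: "2 \<le> n \<Longrightarrow> \<pi> \<in> sep_perms n \<Longrightarrow> pdec \<pi> \<or> mdec \<pi>"
  using key by (auto simp: sep_perms_def)

lemma IM_eq: "2 \<le> n \<Longrightarrow> IM n = {\<pi> \<in> sep_perms n. pdec \<pi>}"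
  using sep_pm excl unfolding IM_def by blast
lemma IP_eq: "2 \<le> n \<Longrightarrow> IP n = {\<pi> \<in> sep_perms n. mdec \<pi>}"
  using sep_pm excl unfolding IP_def by blast

lemma S_split: "2 \<le> n \<Longrightarrow> S n t = (\<Sum>\<pi>\<in>{\<pi> \<in> sep_perms n. pdec \<pi>}. t ^ des \<pi>) + (\<Sum>\<pi>\<in>{\<pi> \<in> sep_perms n. mdec \<pi>}. t ^ des \<pi>)"
proof -
  assume n: "2 \<le> n"
  have "sep_perms n = {\<pi> \<in> sep_perms n. pdec \<pi>} \<union> {\<pi> \<in> sep_perms n. mdec \<pi>}" using sep_pm[OF n] by blast
  hence "S n t = (\<Sum>\<pi>\<in>{\<pi> \<in> sep_perms n. pdec \<pi>} \<union> {\<pi> \<in> sep_perms n. mdec \<pi>}. t ^ des \<pi>)"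
    unfolding S_def by simp
  also have "\<dots> = (\<Sum>\<pi>\<in>{\<pi> \<in> sep_perms n. pdec \<pi>}. t ^ des \<pi>) + (\<Sum>\<pi>\<in>{\<pi> \<in> sep_perms n. mdec \<pi>}. t ^ des \<pi>)"
    by (rule sum.union_disjoint) (use finite_sep excl in auto)
  finally show ?thesis .
qed

lemma sep1: "sep_perms 1 = {[1]}"
proof -
  have eq: "set \<pi> = {1} \<and> distinct \<pi> \<longleftrightarrow> \<pi> = [1]" for \<pi> :: "nat list"
  proof
    assume a: "set \<pi> = {1} \<and> distinct \<pi>"
    hence "length \<pi> = 1" using distinct_card[of \<pi>] by simp
    then obtain x where "\<pi> = [x]" by (cases \<pi>) auto
    thus "\<pi> = [1]" using a by simp
  qed auto
  have "\<not> contains_pattern p [1]" if "length p = 4" for p :: "nat list"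
  proof
    assume "contains_pattern p [1]"
    then obtain ix where ix0: "length ix = length p" "sorted_wrt (<) ix" "\<forall>k<length ix. ix ! k < length [1::nat]"
      unfolding contains_pattern_def by blast
    hence ix: "length ix = 4" "sorted_wrt (<) ix" "\<forall>k<length ix. ix ! k < length [1::nat]" using that by auto
    have "ix ! 0 < ix ! 1" using ix(1,2) by (simp add: sorted_wrt_iff_nth_less)
    moreover have "ix ! 1 < 1" using ix(3) unfolding ix(1) by simp
    ultimately show False by simp
  qed
  hence av1: "av [1]" unfolding av_def avoids_def by simp
  show ?thesis
  proof (intro set_eqI iffI)
    fix \<pi> assume "\<pi> \<in> sep_perms 1"
    hence "set \<pi> = {1} \<and> distinct \<pi>" unfolding sep_iff by simp
    thus "\<pi> \<in> {[1]}" using eq by simp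
  next
    fix \<pi> :: "nat list" assume "\<pi> \<in> {[1]}"
    thus "\<pi> \<in> sep_perms 1" using av1 unfolding sep_iff by simp
  qed
qed

lemma S_one: "S (Suc 0) t = 1" unfolding S_def sep1[unfolded One_nat_def] by simp
lemma IP_one: "IP (Suc 0) = {[1]}" unfolding IP_def sep1[unfolded One_nat_def] by (auto simp: pdec_def)
lemma IM_one: "IM (Suc 0) = {[1]}" unfolding IM_def sep1[unfolded One_nat_def] by (auto simp: mdec_def)

lemma DT_one: "DT (Suc 0) = {Leaf}" by (auto simp: DT_def elim: nodes.elims)
lemma D_one: "D (Suc 0) t = 1" unfolding D_def DT_one by simp

lemma root_cases: "nodes T \<noteq> 0 \<Longrightarrow> root_label T = Some Plus \<or> root_label T = Some Minus"
  by (cases T) (auto intro: sign.exhaust)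

lemma R_S1: "1 \<le> m \<Longrightarrow> R Minus m t = S1 m t"
proof -
  assume m: "1 \<le> m"
  show ?thesis
  proof (cases "m = 1")
    case True
    have "{T \<in> DT (Suc 0). root_label T \<noteq> Some Minus} = {Leaf}" by (auto simp: DT_one)
    thus ?thesis using True by (simp add: R_def S1_def)
  next
    case False
    have "{T \<in> DT m. root_label T \<noteq> Some Minus} = DT_plus m"
    proof (intro set_eqI iffI)
      fix T assume "T \<in> {T \<in> DT m. root_label T \<noteq> Some Minus}"
      hence T: "T \<in> DT m" "root_label T \<noteq> Some Minus" by auto
      hence "nodes T \<noteq> 0" using False m by (auto simp: DT_def)
      hence "root_label T = Some Plus" using root_cases[of T] T(2) by blast
      thus "T \<in> DT_plus m" using T(1) unfolding DT_plus_def by simp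
    qed (auto simp: DT_plus_def)
    thus ?thesis using False by (simp add: R_def S1_def)
  qed
qed

lemma R_S2: "1 \<le> m \<Longrightarrow> R Plus m t = S2 m t"
proof -
  assume m: "1 \<le> m"
  show ?thesis
  proof (cases "m = 1")
    case True
    have "{T \<in> DT (Suc 0). root_label T \<noteq> Some Plus} = {Leaf}" by (auto simp: DT_one)
    thus ?thesis using True by (simp add: R_def S2_def)
  next
    case False
    have "{T \<in> DT m. root_label T \<noteq> Some Plus} = DT_minus m"
    proof (intro set_eqI iffI)
      fix T assume "T \<in> {T \<in> DT m. root_label T \<noteq> Some Plus}"
      hence T: "T \<in> DT m" "root_label T \<noteq> Some Plus" by auto
      hence "nodes T \<noteq> 0" using False m by (auto simp: DT_def)
      hence "root_label T = Some Minus" using root_cases[of T] T(2) by blast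
      thus "T \<in> DT_minus m" using T(1) unfolding DT_minus_def by simp
    qed (auto simp: DT_minus_def)
    thus ?thesis using False by (simp add: R_def S2_def)
  qed
qed

lemma D_split: "2 \<le> n \<Longrightarrow> D n t = S1 n t + S2 n t"
proof -
  assume n: "2 \<le> n"
  have ne: "\<And>T. T \<in> DT n \<Longrightarrow> nodes T \<noteq> 0" using n by (auto simp: DT_def)
  have "DT n = DT_plus n \<union> DT_minus n"
  proof (intro set_eqI iffI)
    fix T assume T: "T \<in> DT n"
    hence "root_label T = Some Plus \<or> root_label T = Some Minus" using ne root_cases by blast
    thus "T \<in> DT_plus n \<union> DT_minus n" using T unfolding DT_plus_def DT_minus_def by blast
  qed (auto simp: DT_plus_def DT_minus_def)
  hence "D n t = (\<Sum>T\<in>DT_plus n \<union> DT_minus n. t ^ n_minus T)" by (simp add: D_def)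
  also have "\<dots> = (\<Sum>T\<in>DT_plus n. t ^ n_minus T) + (\<Sum>T\<in>DT_minus n. t ^ n_minus T)"
    by (rule sum.union_disjoint) (use finite_DT in \<open>auto simp: DT_plus_def DT_minus_def\<close>)
  finally show ?thesis using n by (simp add: S1_def S2_def)
qed

lemma S1_rec: "2 \<le> n \<Longrightarrow> S1 n t = (\<Sum>j=1..n-1. D j t * R Plus (n - j) t)"
  using sumT[where n=n and s=Plus and t=t] by (simp add: S1_def DT_plus_def)
lemma S2_rec: "2 \<le> n \<Longrightarrow> S2 n t = t * (\<Sum>j=1..n-1. D j t * R Minus (n - j) t)"
  using sumT[where n=n and s=Minus and t=t] by (simp add: S2_def DT_minus_def)

lemma main: "1 \<le> n \<Longrightarrow> D n t = S n t \<and> S1 n t = (\<Sum>\<pi>\<in>IM n. t ^ des \<pi>) \<and> S2 n t = (\<Sum>\<pi>\<in>IP n. t ^ des \<pi>)"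
proof (induction n rule: less_induct)
  case (less n)
  show ?case
  proof (cases "n = 1")
    case True thus ?thesis by (simp add: D_one S_one S1_def S2_def IP_one IM_one des_def)
  next
    case False
    hence n: "2 \<le> n" using less.prems by simp
    have IH: "\<And>m. 1 \<le> m \<Longrightarrow> m < n \<Longrightarrow> D m t = S m t \<and> S1 m t = (\<Sum>\<pi>\<in>IM m. t ^ des \<pi>) \<and> S2 m t = (\<Sum>\<pi>\<in>IP m. t ^ des \<pi>)"
      using less.IH by blast
    have a: "S1 n t = (\<Sum>\<pi>\<in>IM n. t ^ des \<pi>)"
    proof -
      have "S1 n t = (\<Sum>j=1..n-1. D j t * R Plus (n - j) t)" using S1_rec[OF n] .
      also have "\<dots> = (\<Sum>j=1..n-1. S j t * (\<Sum>\<tau>\<in>IP (n - j). t ^ des \<tau>))"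
      proof (rule sum.cong[OF refl])
        fix j assume j: "j \<in> {1..n-1}"
        have dj: "D j t = S j t" using IH[of j] j by auto
        have nj: "1 \<le> n - j" "n - j < n" using j n by auto
        have "R Plus (n - j) t = S2 (n - j) t" by (rule R_S2[OF nj(1)])
        also have "\<dots> = (\<Sum>\<tau>\<in>IP (n - j). t ^ des \<tau>)" using IH[OF nj] by blast
        finally have "R Plus (n - j) t = (\<Sum>\<tau>\<in>IP (n - j). t ^ des \<tau>)" .
        thus "D j t * R Plus (n - j) t = S j t * (\<Sum>\<tau>\<in>IP (n - j). t ^ des \<tau>)" using dj by simp
      qed
      also have "\<dots> = (\<Sum>\<pi>\<in>IM n. t ^ des \<pi>)" using sumP[where n=n and t=t] IM_eq[OF n] by simp
      finally show ?thesis .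
    qed
    have b: "S2 n t = (\<Sum>\<pi>\<in>IP n. t ^ des \<pi>)"
    proof -
      have "S2 n t = t * (\<Sum>j=1..n-1. D j t * R Minus (n - j) t)" using S2_rec[OF n] .
      also have "(\<Sum>j=1..n-1. D j t * R Minus (n - j) t) = (\<Sum>j=1..n-1. S j t * (\<Sum>\<tau>\<in>IM (n - j). t ^ des \<tau>))"
      proof (rule sum.cong[OF refl])
        fix j assume j: "j \<in> {1..n-1}"
        have dj: "D j t = S j t" using IH[of j] j by auto
        have nj: "1 \<le> n - j" "n - j < n" using j n by auto
        have "R Minus (n - j) t = S1 (n - j) t" by (rule R_S1[OF nj(1)])
        also have "\<dots> = (\<Sum>\<tau>\<in>IM (n - j). t ^ des \<tau>)" using IH[OF nj] by blast
        finally have "R Minus (n - j) t = (\<Sum>\<tau>\<in>IM (n - j). t ^ des \<tau>)" .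
        thus "D j t * R Minus (n - j) t = S j t * (\<Sum>\<tau>\<in>IM (n - j). t ^ des \<tau>)" using dj by simp
      qed
      also have "t * \<dots> = (\<Sum>\<pi>\<in>IP n. t ^ des \<pi>)" using sumM[where n=n and t=t] IP_eq[OF n] by simp
      finally show ?thesis .
    qed
    have "D n t = S1 n t + S2 n t" by (rule D_split[OF n])
    also have "\<dots> = (\<Sum>\<pi>\<in>{\<pi> \<in> sep_perms n. pdec \<pi>}. t ^ des \<pi>) + (\<Sum>\<pi>\<in>{\<pi> \<in> sep_perms n. mdec \<pi>}. t ^ des \<pi>)"
      unfolding a b IM_eq[OF n] IP_eq[OF n] ..
    also have "\<dots> = S n t" by (rule S_split[OF n, symmetric])
    finally have "D n t = S n t" .
    thus ?thesis using a b by simp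
  qed
qed

theorem lemma5p9:
  fixes t :: "'a::comm_semiring_1" and n :: nat
  assumes "n \<ge> 2"
  shows "S1 n t = (\<Sum>j=1..n-1. S j t * S2 (n - j) t)
    \<and> S2 n t = t * (\<Sum>j=1..n-1. S j t * S1 (n - j) t)"
proof
  show "S1 n t = (\<Sum>j=1..n-1. S j t * S2 (n - j) t)"
    unfolding S1_rec[OF assms]
  proof (rule sum.cong[OF refl])
    fix j assume j: "j \<in> {1..n-1}"
    have "1 \<le> j" "1 \<le> n - j" using j assms by auto
    hence "D j t = S j t" "R Plus (n - j) t = S2 (n - j) t"
      using main[of j t] R_S2[of "n - j" t] by blast+
    thus "D j t * R Plus (n - j) t = S j t * S2 (n - j) t" by simp
  qed
  show "S2 n t = t * (\<Sum>j=1..n-1. S j t * S1 (n - j) t)"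
    unfolding S2_rec[OF assms]
  proof (rule arg_cong[where f = "\<lambda>x. t * x"], rule sum.cong[OF refl])
    fix j assume j: "j \<in> {1..n-1}"
    have "1 \<le> j" "1 \<le> n - j" using j assms by auto
    hence "D j t = S j t" "R Minus (n - j) t = S1 (n - j) t"
      using main[of j t] R_S1[of "n - j" t] by blast+
    thus "D j t * R Minus (n - j) t = S j t * S1 (n - j) t" by simp
  qed
qed

end
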